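(* Let $(q_n)$ be the Fibonacci Quilt sequence. For all integers $k\ge0$ and $\ell\ge1+5k$ (and $\ell\ge6$ when $k\ge1$), \[ q_\ell+q_{\ell-5}+q_{\ell-10}+\cdots+q_{\ell-5k}<q_{\ell+1}. \]
   Context: Given an increasing sequence of positive integers $(q_i)_{i\ge1}$, an FQ-legal decomposition of an integer $m\ge0$ is an expression $m=q_{\ell_1}+q_{\ell_2}+\cdots+q_{\ell_t}$ ($t\ge0$, the empty sum representing $0$) with distinct indices $\ell_1>\ell_2>\cdots>\ell_t$ such that $|\ell_i-\ell_j|\notin\{1,3,4\}$ for all $i,j$, and $\{1,3\}\not\subset\{\ell_1,\dots,\ell_t\}$. The Fibonacci Quilt sequence is the increasing sequence of positive integers $(q_i)_{i\ge1}$ in which each $q_i$ is the smallest positive integer having no FQ-legal decomposition using only $q_1,\dots,q_{i-1}$. Its first terms are $1,2,3,4,5,7,9,12,16,21,28,37,49,\dots$. *)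

theory Defs
  imports Main
begin

definition fq_legal :: "nat set \<Rightarrow> bool" where
  "fq_legal S \<longleftrightarrow> finite S \<and> 0 \<notin> S \<and>
     (\<forall>i\<in>S. \<forall>j\<in>S. \<bar>int i - int j\<bar> \<notin> {1, 3, 4}) \<and> \<not> ({1, 3} \<subseteq> S)"

fun fq_list :: "nat \<Rightarrow> nat list" where
  "fq_list 0 = []"
| "fq_list (Suc n) = fq_list n @
     [LEAST m. m > 0 \<and> \<not> (\<exists>S. S \<subseteq> {1..n} \<and> fq_legal S \<and>
                          (\<Sum>j\<in>S. fq_list n ! (j - 1)) = m)]"

text \<open>The Fibonacci Quilt sequence, indexed from 1 (fq 0 is a meaningless junk value).\<close>
definition fq :: "nat \<Rightarrow> nat" where
  "fq i = last (fq_list i)"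

end

theory Submission
  imports Defs
begin

fun Q :: "nat \<Rightarrow> nat" where
  "Q 0 = 0" | "Q (Suc 0) = 1" | "Q (Suc (Suc 0)) = 2" | "Q (Suc (Suc (Suc 0))) = 3"
| "Q (Suc (Suc (Suc (Suc 0)))) = 4"
| "Q (Suc (Suc (Suc (Suc (Suc n))))) = Q (Suc (Suc (Suc n))) + Q (Suc (Suc n))"

lemma Q_rec: "n \<ge> 2 \<Longrightarrow> Q (n+3) = Q (n+1) + Q n"
proof -
  assume "n \<ge> 2"
  then obtain k where "n = Suc (Suc k)" by (metis add_2_eq_Suc le_Suc_ex)
  then show ?thesis by (simp add: numeral_3_eq_3)
qed

lemma Q_r: "Q (k+5) = Q (k+3) + Q (k+2)"
  by (simp add: eval_nat_numeral)

lemma Q_r2: "Q (k+7) = Q (k+5) + Q (k+4)" using Q_r[of "k+2"] by (simp only: add.assoc semiring_norm)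
lemma Q_r3: "Q (k+6) = Q (k+4) + Q (k+3)" using Q_r[of "k+1"] by (simp only: add.assoc semiring_norm)

lemma Q_Suc_gt: "Q n < Q (Suc n)"
proof (induction n rule: less_induct)
  case (less n)
  show ?case
  proof (cases "n \<le> 4")
    case True
    then have "n = 0 \<or> n = 1 \<or> n = 2 \<or> n = 3 \<or> n = 4" by auto
    then show ?thesis by (auto simp: numeral_eq_Suc)
  next
    case False
    then obtain k where k: "n = k + 5" by (metis add.commute le_Suc_ex not_less_eq_eq numeral_eq_Suc pred_numeral_simps(3) semiring_norm(26) semiring_norm(27))
    have a: "Suc n = k + 6" using k by simp
    have e1: "Q (Suc n) = Q (k+4) + Q (k+3)" unfolding a by (rule Q_r3)
    have e2: "Q n = Q (k+3) + Q (k+2)" unfolding k by (rule Q_r)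
    have "Q (k+2) < Q (k+3)" using less[of "k+2"] k by (simp add: eval_nat_numeral del: Q.simps)
    moreover have "Q (k+3) < Q (k+4)" using less[of "k+3"] k by (simp add: eval_nat_numeral del: Q.simps)
    ultimately show ?thesis using e1 e2 by linarith
  qed
qed

lemma Q_smono: "strict_mono Q"
  by (simp add: Q_Suc_gt strict_mono_Suc_iff)

lemma Q_less: "m < n \<Longrightarrow> Q m < Q n" using Q_smono by (simp add: strict_mono_less)
lemma Q_le: "m \<le> n \<Longrightarrow> Q m \<le> Q n" using Q_smono by (simp add: strict_mono_less_eq)
lemma Q_pos: "n \<ge> 1 \<Longrightarrow> Q n > 0" using Q_less[of 0 n] by simp

lemma Q_rec5: "n \<ge> 6 \<Longrightarrow> Q (n+1) = Q n + Q (n-4)"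
proof -
  assume "n \<ge> 6"
  then obtain k where k: "n = k + 6" by (metis add.commute le_add_diff_inverse)
  have a: "n + 1 = k + 7" "n - 4 = k + 2" "n = k + 6" using k by simp_all
  show ?thesis unfolding a(1,2) unfolding a(3) using Q_r2[of k] Q_r3[of k] Q_r[of k] by linarith
qed

lemma Q_rec3: "n \<ge> 4 \<Longrightarrow> Q (n+3) = Q n + Q (n-1) + Q (n-2)"
proof -
  assume "n \<ge> 4"
  then obtain k where k: "n = k + 4" by (metis add.commute le_add_diff_inverse)
  have a: "n + 3 = k + 7" "n - 1 = k + 3" "n - 2 = k + 2" "n = k + 4" using k by simp_all
  show ?thesis unfolding a(1,2,3) unfolding a(4) using Q_r2[of k] Q_r[of k] by linarith
qed

lemma legal_sub: "fq_legal S \<Longrightarrow> T \<subseteq> S \<Longrightarrow> fq_legal T"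
  unfolding fq_legal_def by (meson finite_subset subset_eq)

lemma legal_gap: "fq_legal S \<Longrightarrow> x \<in> S \<Longrightarrow> y \<in> S \<Longrightarrow> x < y \<Longrightarrow> y - x \<noteq> 1 \<and> y - x \<noteq> 3 \<and> y - x \<noteq> 4"
proof -
  assume a: "fq_legal S" "x \<in> S" "y \<in> S" "x < y"
  then have "\<bar>int x - int y\<bar> \<notin> {1,3,4}" unfolding fq_legal_def by blast
  moreover have "\<bar>int x - int y\<bar> = int (y - x)" using a(4) by simp
  ultimately show ?thesis by auto
qed

lemma legal_pos: "fq_legal S \<Longrightarrow> x \<in> S \<Longrightarrow> x \<ge> 1"
  unfolding fq_legal_def by (metis less_one not_le)

lemma legal_fin: "fq_legal S \<Longrightarrow> finite S"
  unfolding fq_legal_def by blast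

lemma boundA: "fq_legal S \<Longrightarrow> S \<subseteq> {1..m} \<Longrightarrow> sum Q S < Q (m+3)"
proof (induction m arbitrary: S rule: less_induct)
  case (less m S)
  have fin: "finite S" using less.prems legal_fin by blast
  show ?case
  proof (cases "m \<in> S")
    case False
    have sub: "S \<subseteq> {1..m-1}"
    proof
      fix x assume "x \<in> S"
      then have "1 \<le> x" "x \<le> m" "x \<noteq> m" using less.prems(2) False by auto
      then show "x \<in> {1..m-1}" by simp
    qed
    show ?thesis
    proof (cases "m = 0")
      case True then have "S = {}" using less.prems(2) by auto
      then show ?thesis using Q_pos[of "m+3"] by simp
    next
      case False
      have "sum Q S < Q (m-1+3)" using less.IH[of "m-1" S] less.prems(1) sub False by simp
      moreover have "Q (m-1+3) \<le> Q (m+3)" by (rule Q_le) simp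
      ultimately show ?thesis by linarith
    qed
  next
    case True
    define S' where "S' = S - {m}"
    have sumS: "sum Q S = Q m + sum Q S'" unfolding S'_def using fin True by (simp add: sum.remove)
    have legS': "fq_legal S'" using legal_sub less.prems(1) unfolding S'_def by blast
    have fin': "finite S'" using legS' legal_fin by blast
    have Sp: "\<And>x. x \<in> S' \<Longrightarrow> 1 \<le> x \<and> x < m \<and> m - x \<noteq> 1 \<and> m - x \<noteq> 3 \<and> m - x \<noteq> 4"
    proof -
      fix x assume x: "x \<in> S'"
      then have xs: "x \<in> S" "x \<noteq> m" unfolding S'_def by auto
      then have "1 \<le> x" "x < m" using less.prems(2) by auto
      then show "1 \<le> x \<and> x < m \<and> m - x \<noteq> 1 \<and> m - x \<noteq> 3 \<and> m - x \<noteq> 4"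
        using legal_gap[OF less.prems(1) xs(1) True \<open>x<m\<close>] by auto
    qed
    have mgt: "Q m < Q (m+3)" by (rule Q_less) simp
    show ?thesis
    proof (cases "m - 2 \<in> S'")
      case False
      have sub: "S' \<subseteq> {1..m-5}"
      proof
        fix x assume x: "x \<in> S'"
        then have "x \<noteq> m-2" using False by auto
        then show "x \<in> {1..m-5}" using Sp[OF x] by auto
      qed
      show ?thesis
      proof (cases "S' = {}")
        case True then show ?thesis using sumS mgt by simp
      next
        case False
        then have m6: "m \<ge> 6" using sub by fastforce
        have "sum Q S' < Q (m-5+3)" using less.IH[of "m-5" S'] legS' sub m6 by simp
        moreover have "m-5+3 = m-2" using m6 by simp
        ultimately have a: "sum Q S' < Q (m-2)" by simp
        have "Q (m+3) = Q (m+1) + Q m" using Q_rec[of m] m6 by simp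
        moreover have "Q (m-2) < Q (m+1)" by (rule Q_less) simp
        ultimately show ?thesis using sumS a by linarith
      qed
    next
      case True
      define S'' where "S'' = S' - {m-2}"
      have sumS': "sum Q S' = Q (m-2) + sum Q S''" unfolding S''_def using fin' True by (simp add: sum.remove)
      have m3: "m \<ge> 3" using Sp[OF True] by auto
      have legS'': "fq_legal S''" using legal_sub legS' unfolding S''_def by blast
      have sub: "S'' \<subseteq> {1..m-7}"
      proof
        fix x assume x: "x \<in> S''"
        then have x': "x \<in> S'" "x \<noteq> m-2" unfolding S''_def by auto
        have "x < m - 2" using Sp[OF x'(1)] x'(2) by auto
        then have "(m-2) - x \<noteq> 1 \<and> (m-2) - x \<noteq> 3 \<and> (m-2) - x \<noteq> 4"
          using legal_gap[OF legS' x'(1) True] by auto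
        then show "x \<in> {1..m-7}" using Sp[OF x'(1)] x'(2) by auto
      qed
      have rec: "Q (m+3) = Q (m+1) + Q m" using Q_rec[of m] m3 by simp
      have lt: "Q (m-2) < Q (m+1)" by (rule Q_less) simp
      show ?thesis
      proof (cases "S'' = {}")
        case True then show ?thesis using sumS sumS' rec lt by simp
      next
        case False
        then have m8: "m \<ge> 8" using sub by fastforce
        have "sum Q S'' < Q (m-7+3)" using less.IH[of "m-7" S''] legS'' sub m8 by simp
        moreover have "m-7+3 = m-4" using m8 by simp
        ultimately have a: "sum Q S'' < Q (m-4)" by simp
        have "Q (m+3) = Q m + Q (m-1) + Q (m-2)" using Q_rec3[of m] m8 by simp
        moreover have "Q (m-4) < Q (m-1)" by (rule Q_less) (use m8 in simp)
        ultimately show ?thesis using sumS sumS' a by linarith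
      qed
    qed
  qed
qed

lemma Q_lt4: "n \<ge> 4 \<Longrightarrow> Q (n+1) < Q n + Q (n-2)"
proof -
  assume n: "n \<ge> 4"
  show ?thesis
  proof (cases "n \<ge> 6")
    case True
    then have "Q (n+1) = Q n + Q (n-4)" by (rule Q_rec5)
    moreover have "Q (n-4) < Q (n-2)" by (rule Q_less) (use True in simp)
    ultimately show ?thesis by linarith
  next
    case False
    then have "n = 4 \<or> n = 5" using n by auto
    then show ?thesis by (auto simp: eval_nat_numeral)
  qed
qed

lemma boundB: "fq_legal S \<Longrightarrow> S \<subseteq> {1..n} \<Longrightarrow> sum Q S \<noteq> Q (n+1)"
proof (induction n arbitrary: S rule: less_induct)
  case (less n S)
  have fin: "finite S" using less.prems legal_fin by blast
  have inS: "\<And>x. x \<in> S \<Longrightarrow> 1 \<le> x \<and> x \<le> n" using less.prems(2) by auto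
  show ?case
  proof (cases "n \<in> S")
    case True
    define S' where "S' = S - {n}"
    have sumS: "sum Q S = Q n + sum Q S'" unfolding S'_def using fin True by (simp add: sum.remove)
    have legS': "fq_legal S'" using legal_sub less.prems(1) unfolding S'_def by blast
    have fin': "finite S'" using legS' legal_fin by blast
    have Sp: "\<And>x. x \<in> S' \<Longrightarrow> 1 \<le> x \<and> x < n \<and> n - x \<noteq> 1 \<and> n - x \<noteq> 3 \<and> n - x \<noteq> 4"
    proof -
      fix x assume x: "x \<in> S'"
      then have xs: "x \<in> S" "x \<noteq> n" unfolding S'_def by auto
      then have "1 \<le> x" "x < n" using inS[OF xs(1)] by auto
      then show "1 \<le> x \<and> x < n \<and> n - x \<noteq> 1 \<and> n - x \<noteq> 3 \<and> n - x \<noteq> 4"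
        using legal_gap[OF less.prems(1) xs(1) True \<open>x<n\<close>] by auto
    qed
    have ne: "Q n \<noteq> Q (n+1)" using Q_less[of n "n+1"] by simp
    show ?thesis
    proof (cases "n - 2 \<in> S'")
      case True
      have n3: "n \<ge> 3" using Sp[OF True] by auto
      have n4: "n \<ge> 4"
      proof (rule ccontr)
        assume "\<not> n \<ge> 4"
        then have "n = 3" using n3 by auto
        then have "{1,3} \<subseteq> S" using True \<open>n \<in> S\<close> unfolding S'_def by auto
        then show False using less.prems(1) unfolding fq_legal_def by blast
      qed
      have "Q (n-2) \<le> sum Q S'" using fin' True by (simp add: member_le_sum)
      then show ?thesis using sumS Q_lt4[OF n4] by linarith
    next
      case False
      have sub: "S' \<subseteq> {1..n-5}"
      proof
        fix x assume x: "x \<in> S'"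
        then have "x \<noteq> n-2" using False by auto
        then show "x \<in> {1..n-5}" using Sp[OF x] by auto
      qed
      show ?thesis
      proof (cases "S' = {}")
        case True then show ?thesis using sumS ne by simp
      next
        case False
        then have n6: "n \<ge> 6" using sub by fastforce
        have "sum Q S' \<noteq> Q (n-5+1)" using less.IH[of "n-5" S'] legS' sub n6 by simp
        moreover have "n-5+1 = n-4" using n6 by simp
        ultimately have a: "sum Q S' \<noteq> Q (n-4)" by simp
        have "Q (n+1) = Q n + Q (n-4)" using Q_rec5 n6 by blast
        then show ?thesis using sumS a by linarith
      qed
    qed
  next
    case False
    note nS = False
    show ?thesis
    proof (cases "n - 1 \<in> S")
      case True
      define S' where "S' = S - {n-1}"
      have sumS: "sum Q S = Q (n-1) + sum Q S'" unfolding S'_def using fin True by (simp add: sum.remove)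
      have legS': "fq_legal S'" using legal_sub less.prems(1) unfolding S'_def by blast
      have n1: "n \<ge> 2" using inS[OF True] by auto
      have sub: "S' \<subseteq> {1..n-3}"
      proof
        fix x assume x: "x \<in> S'"
        then have xs: "x \<in> S" "x \<noteq> n-1" unfolding S'_def by auto
        have "x \<noteq> n" using xs nS by auto
        then have "1 \<le> x" "x < n - 1" using inS[OF xs(1)] xs(2) by auto
        then show "x \<in> {1..n-3}"
          using legal_gap[OF less.prems(1) xs(1) True \<open>x<n-1\<close>] by auto
      qed
      have "Q (n-1) < Q (n+1)" by (rule Q_less) (use n1 in arith)
      then have ne: "Q (n-1) \<noteq> Q (n+1)" by simp
      show ?thesis
      proof (cases "S' = {}")
        case True then show ?thesis using sumS ne by simp
      next
        case False
        then have n4: "n \<ge> 4" using sub by fastforce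
        have "sum Q S' \<noteq> Q (n-3+1)" using less.IH[of "n-3" S'] legS' sub n4 by simp
        moreover have "n-3+1 = n-2" using n4 by simp
        ultimately have a: "sum Q S' \<noteq> Q (n-2)" by simp
        have "Q (n-2+3) = Q (n-2+1) + Q (n-2)" using Q_rec[of "n-2"] n4 by simp
        moreover have "n-2+3 = n+1" "n-2+1 = n-1" using n4 by simp_all
        ultimately have "Q (n+1) = Q (n-1) + Q (n-2)" by simp
        then show ?thesis using sumS a by linarith
      qed
    next
      case False
      have sub: "S \<subseteq> {1..n-2}"
      proof
        fix x assume x: "x \<in> S"
        then have "x \<noteq> n" "x \<noteq> n-1" using False nS by auto
        then show "x \<in> {1..n-2}" using inS[OF x] by auto
      qed
      show ?thesis
      proof (cases "S = {}")
        case True then show ?thesis using Q_pos[of "n+1"] by simp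
      next
        case False
        then have n3: "n \<ge> 3" using sub by fastforce
        have "sum Q S < Q (n-2+3)" using boundA less.prems(1) sub by blast
        moreover have "n-2+3 = n+1" using n3 by simp
        ultimately show ?thesis by simp
      qed
    qed
  qed
qed

lemma legal_insert:
  assumes "fq_legal S" "S \<subseteq> {1..m}" "m + 5 \<le> n"
  shows "fq_legal (insert n S)"
proof -
  have fin: "finite S" "0 \<notin> S" and g: "\<forall>i\<in>S. \<forall>j\<in>S. \<bar>int i - int j\<bar> \<notin> {1, 3, 4}"
    and c: "\<not> ({1, 3} \<subseteq> S)" using assms(1) unfolding fq_legal_def by blast+
  have far: "\<And>y. y \<in> S \<Longrightarrow> \<bar>int n - int y\<bar> \<ge> 5 \<and> \<bar>int y - int n\<bar> \<ge> 5"
    using assms(2,3) by force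
  have "\<forall>i\<in>insert n S. \<forall>j\<in>insert n S. \<bar>int i - int j\<bar> \<notin> {1, 3, 4}"
  proof (intro ballI)
    fix i j assume i: "i \<in> insert n S" and j: "j \<in> insert n S"
    show "\<bar>int i - int j\<bar> \<notin> {1, 3, 4}"
    proof (cases "i = n")
      case True
      then show ?thesis
        using j far by (cases "j = n") fastforce+
    next
      case False
      then have "i \<in> S" using i by auto
      then show ?thesis using j far g by (cases "j = n") fastforce+
    qed
  qed
  moreover have "\<not> ({1, 3} \<subseteq> insert n S)" using c assms(3) by auto
  moreover have "n \<noteq> 0" using assms(3) by auto
  ultimately show ?thesis using fin unfolding fq_legal_def by auto
qed

lemma existC: "x < Q (n+1) \<Longrightarrow> \<exists>S. S \<subseteq> {1..n} \<and> fq_legal S \<and> sum Q S = x"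
proof (induction n arbitrary: x rule: less_induct)
  case (less n x)
  show ?case
  proof (cases "n = 0")
    case True
    then have "x = 0" using less.prems by simp
    then show ?thesis by (rule_tac x="{}" in exI) (simp add: fq_legal_def)
  next
    case False
    show ?thesis
    proof (cases "x < Q n")
      case True
      then have "x < Q (n-1+1)" using False by simp
      then obtain S where "S \<subseteq> {1..n-1}" "fq_legal S" "sum Q S = x"
        using less.IH[of "n-1"] False by auto
      moreover have "{1..n-1} \<subseteq> {1..n}" by auto
      ultimately show ?thesis by blast
    next
      case xb: False
      show ?thesis
      proof (cases "n \<ge> 6")
        case True
        have "Q (n+1) = Q n + Q (n-4)" using Q_rec5 True by blast
        moreover have "n-5+1 = n-4" using True by simp
        ultimately have "x - Q n < Q (n-5+1)" using less.prems xb by simp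
        then obtain S where S: "S \<subseteq> {1..n-5}" "fq_legal S" "sum Q S = x - Q n"
          using less.IH[of "n-5"] True by auto
        have "fq_legal (insert n S)" using legal_insert[OF S(2,1)] True by simp
        moreover have "n \<notin> S" using S(1) True by auto
        moreover have "finite S" using S(2) legal_fin by blast
        moreover have "insert n S \<subseteq> {1..n}"
        proof
          fix y assume "y \<in> insert n S"
          then have "y = n \<or> y \<in> {1..n-5}" using S(1) by blast
          then show "y \<in> {1..n}" using True by auto
        qed
        ultimately show ?thesis using S(3) xb
          by (rule_tac x="insert n S" in exI) simp
      next
        case False
        then have "n = 1 \<or> n = 2 \<or> n = 3 \<or> n = 4 \<or> n = 5" using \<open>n \<noteq> 0\<close> by auto
        then show ?thesis
        proof (elim disjE)
          assume n: "n = 1"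
          then have "x = 1" using less.prems xb by simp
          then show ?thesis using n by (rule_tac x="{1}" in exI) (simp add: fq_legal_def)
        next
          assume n: "n = 2"
          then have "x = 2" using less.prems xb by (simp add: eval_nat_numeral)
          then show ?thesis using n by (rule_tac x="{2}" in exI) (simp add: fq_legal_def eval_nat_numeral)
        next
          assume n: "n = 3"
          then have "x = 3" using less.prems xb by (simp add: eval_nat_numeral)
          then show ?thesis using n by (rule_tac x="{3}" in exI) (simp add: fq_legal_def eval_nat_numeral)
        next
          assume n: "n = 4"
          then have "x = 4" using less.prems xb by (simp add: eval_nat_numeral)
          then show ?thesis using n by (rule_tac x="{4}" in exI) (simp add: fq_legal_def eval_nat_numeral)
        next
          assume n: "n = 5"
          have "Q 6 = 7" "Q 5 = 5" by (simp_all add: eval_nat_numeral)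
          then have "x = 5 \<or> x = 6" using less.prems xb n by auto
          then show ?thesis
          proof
            assume "x = 5" then show ?thesis using n
              by (rule_tac x="{5}" in exI) (simp add: fq_legal_def eval_nat_numeral)
          next
            assume "x = 6" then show ?thesis using n
              by (rule_tac x="{2,4}" in exI) (simp add: fq_legal_def eval_nat_numeral)
          qed
        qed
      qed
    qed
  qed
qed

lemma fq_list_Q: "fq_list n = map Q [1..<Suc n]"
proof (induction n)
  case 0
  then show ?case by simp
next
  case (Suc n)
  have nth: "\<And>j. j \<in> {1..n} \<Longrightarrow> fq_list n ! (j - 1) = Q j"
  proof -
    fix j assume "j \<in> {1..n}"
    then have "j - 1 < n" "Suc (j - 1) = j" by auto
    then show "fq_list n ! (j - 1) = Q j" using Suc.IH by (simp del: upt_Suc add: nth_upt)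
  qed
  have eqP: "\<And>m. (\<exists>S. S \<subseteq> {1..n} \<and> fq_legal S \<and> (\<Sum>j\<in>S. fq_list n ! (j - 1)) = m)
       \<longleftrightarrow> (\<exists>S. S \<subseteq> {1..n} \<and> fq_legal S \<and> sum Q S = m)"
  proof -
    fix m
    have "\<And>S. S \<subseteq> {1..n} \<Longrightarrow> (\<Sum>j\<in>S. fq_list n ! (j - 1)) = sum Q S"
      using nth by (intro sum.cong refl) blast
    then show "?thesis m" by metis
  qed
  have L: "(LEAST m. m > 0 \<and> \<not> (\<exists>S. S \<subseteq> {1..n} \<and> fq_legal S \<and>
                          (\<Sum>j\<in>S. fq_list n ! (j - 1)) = m)) = Q (Suc n)"
    unfolding eqP
  proof (rule Least_equality)
    show "0 < Q (Suc n) \<and> \<not> (\<exists>S. S \<subseteq> {1..n} \<and> fq_legal S \<and> sum Q S = Q (Suc n))"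
      using Q_pos[of "Suc n"] boundB[of _ n] by auto
  next
    fix y assume y: "0 < y \<and> \<not> (\<exists>S. S \<subseteq> {1..n} \<and> fq_legal S \<and> sum Q S = y)"
    show "Q (Suc n) \<le> y"
    proof (rule ccontr)
      assume "\<not> Q (Suc n) \<le> y"
      then have "y < Q (n+1)" by simp
      then show False using existC y by blast
    qed
  qed
  show ?case using Suc.IH L by simp
qed

lemma fq_Q: "i \<ge> 1 \<Longrightarrow> fq i = Q i"
  unfolding fq_def fq_list_Q by (simp add: last_map)

lemma mainQ: "l \<ge> 1 + 5 * k \<Longrightarrow> (k \<ge> 1 \<Longrightarrow> l \<ge> 6) \<Longrightarrow> (\<Sum>j\<le>k. Q (l - 5 * j)) < Q (l + 1)"
proof (induction k arbitrary: l)
  case 0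
  then show ?case using Q_less[of l "l+1"] by simp
next
  case (Suc k)
  have l6: "l \<ge> 6" using Suc.prems by simp
  have S: "(\<Sum>j\<le>Suc k. Q (l - 5 * j)) = Q (l - 5 * 0) + (\<Sum>j\<le>k. Q (l - 5 * Suc j))"
    by (rule sum.atMost_Suc_shift)
  have C1: "(\<Sum>j\<le>k. Q (l - 5 * Suc j)) = (\<Sum>j\<le>k. Q ((l - 5) - 5 * j))"
    by (rule sum.cong) (auto simp: algebra_simps)
  have C2: "(\<Sum>j\<le>k. Q ((l - 5) - 5 * j)) < Q (l - 5 + 1)"
    using Suc.IH[of "l-5"] Suc.prems by simp
  have A: "(\<Sum>j\<le>Suc k. Q (l - 5 * j)) < Q (l - 5 * 0) + Q (l - 5 + 1)"
    using S C1 C2 by linarith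
  have eqs: "l - 5 * 0 = l" "l - 5 + 1 = l - 4" using l6 by simp_all
  have B: "Q (l - 5 * 0) + Q (l - 5 + 1) = Q (l + 1)" unfolding eqs using Q_rec5[OF l6] by simp
  show ?case using A B by linarith
qed

theorem mainTheorem15:
  fixes k l :: nat
  assumes "l \<ge> 1 + 5 * k"
    and "k \<ge> 1 \<Longrightarrow> l \<ge> 6"
  shows "(\<Sum>j\<le>k. fq (l - 5 * j)) < fq (l + 1)"
proof -
  have "(\<Sum>j\<le>k. fq (l - 5 * j)) = (\<Sum>j\<le>k. Q (l - 5 * j))"
  proof (rule sum.cong)
    fix j assume "j \<in> {..k}"
    then have "l - 5 * j \<ge> 1" using assms(1) by auto
    then show "fq (l - 5 * j) = Q (l - 5 * j)" by (rule fq_Q)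
  qed simp
  moreover have "fq (l+1) = Q (l+1)" by (rule fq_Q) simp
  ultimately show ?thesis using mainQ[OF assms] by simp
qed

end
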